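(* Let $(\boldsymbol A,\mathcal S)$ be a data pair and $\boldsymbol M$, $\rho$, $d_\rho$ as in the context. Then (i) for all $z\in\mathbb H$, \[ \|\boldsymbol M(z)\|_2\le\frac{1}{d_\rho(z)},\qquad (\operatorname{Im}z)\|\boldsymbol M(z)^{-1}\|_2^{-2}\,1\le\operatorname{Im}\boldsymbol M(z)\le\frac{\operatorname{Im}z}{d_\rho(z)^2}\,1,\qquad \|\boldsymbol M(z)^{-1}\|_2\le|z|+\|\boldsymbol A\|_2+\|\mathcal S\|\,\|\boldsymbol M(z)\|_2; \] (ii) for all $z\in\mathbb H$, $\rho(z)\le\dfrac{\operatorname{Im}z}{\pi d_\rho(z)^2}$.
   Context: $\mathbb H=\{w\in\mathbb C:\operatorname{Im}w>0\}$. On $\mathbb C^{n\times n}$: $\langle\boldsymbol R,\boldsymbol T\rangle=\frac1n\operatorname{Tr}(\boldsymbol R^*\boldsymbol T)$, $\langle\boldsymbol R\rangle=\frac1n\operatorname{Tr}\boldsymbol R$, $\|\cdot\|_2$ the operator norm induced by the Euclidean norm, $\|\mathcal S\|$ the operator norm of a linear map $\mathcal S$ on $\mathbb C^{n\times n}$ induced by $\|\cdot\|_2$; inequalities between Hermitian matrices are in the positive semidefinite order. A data pair $(\boldsymbol A,\mathcal S)$: $\boldsymbol A\in\mathbb C^{n\times n}$ with $\operatorname{Im}\boldsymbol A=\frac1{2i}(\boldsymbol A-\boldsymbol A^* )\le0$, and $\mathcal S$ linear, self-adjoint w.r.t. $\langle\cdot,\cdot\rangle$, positivity preserving. $\boldsymbol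 M(z)$ is the unique solution of $-\boldsymbol M(z)^{-1}=z1-\boldsymbol A+\mathcal S[\boldsymbol M(z)]$ with positive definite imaginary part; it has the representation $\boldsymbol M(z)=\int\frac{\boldsymbol V(d\tau)}{\tau-z}$ with a unique positive semidefinite matrix-valued measure $\boldsymbol V$, $\boldsymbol V(\mathbb R)=1$. The self-consistent density of states is $\rho(d\tau)=\frac1n\operatorname{Tr}\boldsymbol V(d\tau)$, its harmonic extension is $\rho(z)=\frac1\pi\langle\operatorname{Im}\boldsymbol M(z)\rangle$, and $d_\rho(z)=\operatorname{dist}(z,\operatorname{supp}\rho)$. *)

theory Defs
  imports "HOL-Analysis.Analysis"
begin

(* n x n complex matrices are modelled as complex^'n^'n, with 'n a finite index type, n = CARD('n) *)

definition cscale :: "complex \<Rightarrow> complex^'n^'m \<Rightarrow> complex^'n^'m" where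
  "cscale c R = (\<chi> i j. c * R$i$j)"

definition adj :: "complex^'n^'m \<Rightarrow> complex^'m^'n" where
  "adj R = (\<chi> i j. cnj (R$j$i))"

definition hermitian :: "complex^'n^'n \<Rightarrow> bool" where
  "hermitian R \<longleftrightarrow> adj R = R"

definition qf :: "complex^'n \<Rightarrow> complex^'n^'n \<Rightarrow> complex" where
  "qf x R = (\<Sum>i\<in>UNIV. cnj (x$i) * (R *v x)$i)"

definition psd :: "complex^'n^'n \<Rightarrow> bool" where
  "psd R \<longleftrightarrow> hermitian R \<and> (\<forall>x. 0 \<le> Re (qf x R))"

definition pd :: "complex^'n^'n \<Rightarrow> bool" where
  "pd R \<longleftrightarrow> hermitian R \<and> (\<forall>x. x \<noteq> 0 \<longrightarrow> 0 < Re (qf x R))"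

definition loewner_le :: "complex^'n^'n \<Rightarrow> complex^'n^'n \<Rightarrow> bool" where
  "loewner_le R T \<longleftrightarrow> psd (T - R)"

definition ImM :: "complex^'n^'n \<Rightarrow> complex^'n^'n" where
  "ImM R = cscale (1 / (2 * \<i>)) (R - adj R)"

definition mtrace :: "complex^'n^'n \<Rightarrow> complex" where
  "mtrace R = (\<Sum>i\<in>UNIV. R$i$i)"

definition inner_hs :: "complex^'n^'n \<Rightarrow> complex^'n^'n \<Rightarrow> complex" where
  "inner_hs R T = mtrace (adj R ** T) / of_nat CARD('n)"

(* operator norm induced by the Euclidean norm (norm on complex^'n is the Euclidean norm) *)
definition opnorm2 :: "complex^'n^'n \<Rightarrow> real" where
  "opnorm2 R = onorm (\<lambda>x. R *v x)"

definition opnorm_S :: "(complex^'n^'n \<Rightarrow> complex^'n^'n) \<Rightarrow> real" where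
  "opnorm_S S = (SUP R\<in>{R. opnorm2 R \<le> 1}. opnorm2 (S R))"

definition data_pair :: "complex^'n^'n \<Rightarrow> (complex^'n^'n \<Rightarrow> complex^'n^'n) \<Rightarrow> bool" where
  "data_pair A S \<longleftrightarrow>
     loewner_le (ImM A) 0 \<and>
     (\<forall>R T. S (R + T) = S R + S T) \<and>
     (\<forall>c R. S (cscale c R) = cscale c (S R)) \<and>
     (\<forall>R T. inner_hs R (S T) = inner_hs (S R) T) \<and>
     (\<forall>R. psd R \<longrightarrow> psd (S R))"

definition solves_MDE ::
  "complex^'n^'n \<Rightarrow> (complex^'n^'n \<Rightarrow> complex^'n^'n) \<Rightarrow> (complex \<Rightarrow> complex^'n^'n) \<Rightarrow> bool" where
  "solves_MDE A S M \<longleftrightarrow>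
     (\<forall>z. 0 < Im z \<longrightarrow>
        invertible (M z) \<and>
        - matrix_inv (M z) = cscale z (mat 1) - A + S (M z) \<and>
        pd (ImM (M z)))"

definition psd_matrix_measure :: "(real set \<Rightarrow> complex^'n^'n) \<Rightarrow> bool" where
  "psd_matrix_measure V \<longleftrightarrow>
     (\<forall>B\<in>sets borel. psd (V B)) \<and> V {} = 0 \<and>
     (\<forall>F. range F \<subseteq> sets borel \<longrightarrow> disjoint_family F \<longrightarrow>
          (\<lambda>k. V (F k)) sums V (\<Union>k. F k))"

definition qmeasure :: "(real set \<Rightarrow> complex^'n^'n) \<Rightarrow> complex^'n \<Rightarrow> real measure" where
  "qmeasure V x = measure_of UNIV (sets borel) (\<lambda>B. ennreal (Re (qf x (V B))))"

(* M(z) = \<integral> V(d\<tau>)/(\<tau> - z), stated through all quadratic forms (these determine a matrix by polarization) *)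
definition stieltjes_rep :: "(real set \<Rightarrow> complex^'n^'n) \<Rightarrow> (complex \<Rightarrow> complex^'n^'n) \<Rightarrow> bool" where
  "stieltjes_rep V M \<longleftrightarrow>
     (\<forall>z. 0 < Im z \<longrightarrow> (\<forall>x. qf x (M z) =
        (LINT \<tau>|qmeasure V x. 1 / (complex_of_real \<tau> - z))))"

definition dos :: "(real set \<Rightarrow> complex^'n^'n) \<Rightarrow> real measure" where
  "dos V = measure_of UNIV (sets borel) (\<lambda>B. ennreal (Re (mtrace (V B)) / real CARD('n)))"

definition msupp :: "real measure \<Rightarrow> real set" where
  "msupp \<mu> = {\<tau>. \<forall>e>0. emeasure \<mu> (ball \<tau> e) > 0}"

definition d_rho :: "real measure \<Rightarrow> complex \<Rightarrow> real" where
  "d_rho \<mu> z = infdist z (complex_of_real ` msupp \<mu>)"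

definition rho_ext :: "(complex \<Rightarrow> complex^'n^'n) \<Rightarrow> complex \<Rightarrow> real" where
  "rho_ext M z = Re (mtrace (ImM (M z)) / of_nat CARD('n)) / pi"

end

theory Submission
  imports Defs
begin



definition ip :: "complex^'n \<Rightarrow> complex^'n \<Rightarrow> complex" where
  "ip x y = (\<Sum>i\<in>UNIV. cnj (x$i) * y$i)"

lemma qf_ip: "qf x R = ip x (R *v x)" by (simp add: qf_def ip_def)

lemma qf_alt: "qf x R = (\<Sum>i\<in>UNIV. \<Sum>j\<in>UNIV. cnj (x$i) * R$i$j * x$j)"
  by (simp add: qf_def matrix_vector_mult_def sum_distrib_left mult.assoc)

lemma qf_add: "qf x (R + T) = qf x R + qf x T"
  by (simp add: qf_alt algebra_simps sum.distrib)
lemma qf_diff: "qf x (R - T) = qf x R - qf x T"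
  by (simp add: qf_alt algebra_simps sum_subtractf)
lemma qf_uminus: "qf x (- R) = - qf x R"
  by (simp add: qf_alt sum_negf)
lemma qf_zero: "qf x 0 = 0"
  by (simp add: qf_alt)
lemma qf_cscale: "qf x (cscale c R) = c * qf x R"
  by (simp add: qf_alt cscale_def sum_distrib_left algebra_simps)
lemma qf_mat1: "qf x (mat 1) = of_real ((norm x)^2)"
proof -
  have e: "\<And>i. cnj (x$i) * x$i = of_real ((norm (x$i))^2)"
    by (metis complex_norm_square mult.commute)
  have "qf x (mat 1) = (\<Sum>i\<in>UNIV. of_real ((norm (x$i))^2))"
    unfolding qf_def matrix_vector_mul_lid using e by (rule sum.cong[OF refl])
  also have "\<dots> = of_real (\<Sum>i\<in>UNIV. (norm (x$i))^2)" by simp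
  also have "(\<Sum>i\<in>UNIV. (norm (x$i))^2) = (norm x)^2"
    by (simp add: norm_vec_def L2_set_def sum_nonneg)
  finally show ?thesis .
qed

lemma adj_adj[simp]: "adj (adj R) = R" by (simp add: adj_def vec_eq_iff)
lemma adj_add: "adj (R + T) = adj R + adj T" by (simp add: adj_def vec_eq_iff)
lemma adj_diff: "adj (R - T) = adj R - adj T" by (simp add: adj_def vec_eq_iff)
lemma adj_uminus: "adj (- R) = - adj R" by (simp add: adj_def vec_eq_iff)
lemma adj_zero: "adj 0 = 0" by (simp add: adj_def vec_eq_iff)
lemma adj_cscale: "adj (cscale c R) = cscale (cnj c) (adj R)" by (simp add: adj_def cscale_def vec_eq_iff)
lemma adj_mat1: "adj (mat 1 :: complex^'n^'n) = mat 1" by (simp add: adj_def mat_def vec_eq_iff)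
lemma adj_mult: "adj (R ** T) = adj T ** adj R"
  by (simp add: adj_def matrix_matrix_mult_def vec_eq_iff mult.commute)

lemma ip_adj: "ip x (adj P *v y) = ip (P *v x) y"
proof -
  have "ip x (adj P *v y) = (\<Sum>i\<in>UNIV. \<Sum>j\<in>UNIV. cnj (x$i) * cnj (P$j$i) * y$j)"
    by (simp add: ip_def matrix_vector_mult_def adj_def sum_distrib_left mult.assoc)
  also have "\<dots> = (\<Sum>j\<in>UNIV. \<Sum>i\<in>UNIV. cnj (x$i) * cnj (P$j$i) * y$j)"
    by (rule sum.swap)
  also have "\<dots> = ip (P *v x) y"
    by (simp add: ip_def matrix_vector_mult_def sum_distrib_right sum_distrib_left algebra_simps)
  finally show ?thesis .
qed

lemma qf_sandwich: "qf x (adj P ** Q ** P) = qf (P *v x) Q"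
  by (simp add: qf_ip ip_adj flip: matrix_vector_mul_assoc)

lemma qf_adj: "qf x (adj R) = cnj (qf x R)"
proof -
  have "qf x (adj R) = (\<Sum>i\<in>UNIV. \<Sum>j\<in>UNIV. cnj (x$i) * cnj (R$j$i) * x$j)"
    by (simp add: qf_alt adj_def)
  also have "\<dots> = (\<Sum>j\<in>UNIV. \<Sum>i\<in>UNIV. cnj (x$i) * cnj (R$j$i) * x$j)"
    by (rule sum.swap)
  also have "\<dots> = cnj (qf x R)"
    by (simp add: qf_alt algebra_simps)
  finally show ?thesis .
qed

lemma herm_qf_real: "hermitian R \<Longrightarrow> Im (qf x R) = 0"
proof -
  assume "hermitian R"
  then have "qf x R = cnj (qf x R)" using qf_adj[of x R] unfolding hermitian_def by simp
  then have "Im (qf x R) = Im (cnj (qf x R))" by simp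
  then show ?thesis by simp
qed

lemma ImM_herm: "hermitian (ImM R)"
  unfolding hermitian_def ImM_def by (simp add: adj_def cscale_def vec_eq_iff field_simps)

lemma qf_ImM: "qf x (ImM R) = of_real (Im (qf x R))"
  unfolding ImM_def by (simp add: qf_cscale qf_diff qf_adj complex_diff_cnj field_simps)

lemma herm_add: "hermitian R \<Longrightarrow> hermitian T \<Longrightarrow> hermitian (R + T)"
  by (simp add: hermitian_def adj_add)
lemma herm_diff: "hermitian R \<Longrightarrow> hermitian T \<Longrightarrow> hermitian (R - T)"
  by (simp add: hermitian_def adj_diff)
lemma herm_cscale_real: "hermitian R \<Longrightarrow> hermitian (cscale (of_real c) R)"
  by (simp add: hermitian_def adj_cscale)
lemma herm_mat1: "hermitian (mat 1 :: complex^'n^'n)"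
  by (simp add: hermitian_def adj_mat1)




lemma psd_Re: "psd R \<Longrightarrow> 0 \<le> Re (qf x R)" by (simp add: psd_def)

lemma scaleR_cscale: "r *\<^sub>R R = cscale (of_real r) R"
  unfolding cscale_def vec_eq_iff
  by (simp only: vector_scaleR_component vec_lambda_beta) (simp add: scaleR_conv_of_real)

lemma cscale_zero: "cscale 0 R = 0" by (simp add: cscale_def vec_eq_iff)
lemma cscale_m1: "cscale (-1) R = - R" by (simp add: cscale_def vec_eq_iff)

lemma qf_bound: "cmod (qf x H) \<le> (\<Sum>i\<in>UNIV. \<Sum>j\<in>UNIV. cmod (H$i$j)) * (norm x)^2"
proof -
  have "cmod (qf x H) \<le> (\<Sum>i\<in>UNIV. \<Sum>j\<in>UNIV. cmod (cnj (x$i) * H$i$j * x$j))"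
    unfolding qf_alt by (rule order_trans[OF norm_sum sum_mono[OF norm_sum]])
  also have "\<dots> \<le> (\<Sum>i\<in>UNIV. \<Sum>j\<in>UNIV. cmod (H$i$j) * (norm x)^2)"
  proof (intro sum_mono)
    fix i j
    have "cmod (cnj (x$i) * H$i$j * x$j) = cmod (H$i$j) * (cmod (x$i) * cmod (x$j))"
      by (simp add: norm_mult)
    also have "\<dots> \<le> cmod (H$i$j) * (norm x * norm x)"
      by (intro mult_left_mono mult_mono) (auto simp: Finite_Cartesian_Product.norm_nth_le)
    finally show "cmod (cnj (x$i) * H$i$j * x$j) \<le> cmod (H$i$j) * (norm x)^2"
      by (simp add: power2_eq_square)
  qed
  also have "\<dots> = (\<Sum>i\<in>UNIV. \<Sum>j\<in>UNIV. cmod (H$i$j)) * (norm x)^2"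
    by (simp add: sum_distrib_right)
  finally show ?thesis .
qed

lemma herm_shift_psd:
  assumes "hermitian H"
  shows "psd (H + cscale (of_real (\<Sum>i\<in>UNIV. \<Sum>j\<in>UNIV. cmod (H$i$j))) (mat 1))"
  unfolding psd_def
proof (intro conjI allI)
  show "hermitian (H + cscale (of_real (\<Sum>i\<in>UNIV. \<Sum>j\<in>UNIV. cmod (H$i$j))) (mat 1))"
    by (intro herm_add herm_cscale_real assms herm_mat1)
  fix x
  let ?c = "(\<Sum>i\<in>UNIV. \<Sum>j\<in>UNIV. cmod (H$i$j))"
  have "- Re (qf x H) \<le> cmod (qf x H)" using abs_Re_le_cmod[of "qf x H"] by linarith
  also have "\<dots> \<le> ?c * (norm x)^2" by (rule qf_bound)
  finally show "0 \<le> Re (qf x (H + cscale (of_real ?c) (mat 1)))"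
    by (simp add: qf_add qf_cscale qf_mat1)
qed

context
  fixes A :: "complex^'n^'n" and S :: "complex^'n^'n \<Rightarrow> complex^'n^'n"
  assumes dp: "data_pair A S"
begin

lemma S_add: "S (R + T) = S R + S T" using dp by (simp add: data_pair_def)
lemma S_cscale: "S (cscale c R) = cscale c (S R)" using dp by (simp add: data_pair_def)
lemma S_psd: "psd R \<Longrightarrow> psd (S R)" using dp by (simp add: data_pair_def)
lemma S_zero: "S 0 = 0"
  using S_cscale[of 0 0] by (simp add: cscale_zero)
lemma S_uminus: "S (- R) = - S R"
  using S_cscale[of "-1" R] by (simp add: cscale_m1)
lemma S_diff: "S (R - T) = S R - S T"
  using S_add[of R "- T"] S_uminus[of T] by simp

lemma S_linear: "linear S"
  by (rule linearI) (simp_all add: S_add scaleR_cscale S_cscale)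

lemma S_blin: "bounded_linear S"
  using S_linear by (rule linear_conv_bounded_linear[THEN iffD1])

lemma S_herm: assumes "hermitian H" shows "hermitian (S H)"
proof -
  obtain c where c: "psd (H + cscale (of_real c) (mat 1))"
    using herm_shift_psd[OF assms] by blast
  have p1: "psd (S (H + cscale (of_real c) (mat 1)))"
    by (rule S_psd[OF c])
  have "psd (mat 1 :: complex^'n^'n)"
    by (simp add: psd_def herm_mat1 qf_mat1)
  then have p2: "psd (S (mat 1))" by (rule S_psd)
  have e: "S H = S (H + cscale (of_real c) (mat 1)) - cscale (of_real c) (S (mat 1))"
    by (simp add: S_add S_cscale)
  have "hermitian (S (H + cscale (of_real c) (mat 1)) - cscale (of_real c) (S (mat 1)))"
    using p1 p2 unfolding psd_def by (intro herm_diff herm_cscale_real) auto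
  then show ?thesis using e by simp
qed

lemma S_adj: "S (adj R) = adj (S R)"
proof -
  define H1 where "H1 = cscale (1/2) (R + adj R)"
  define H2 where "H2 = ImM R"
  have h1: "hermitian H1" unfolding H1_def hermitian_def
    by (simp add: adj_def cscale_def vec_eq_iff)
  have h2: "hermitian H2" unfolding H2_def by (rule ImM_herm)
  have R: "R = H1 + cscale \<i> H2"
    unfolding H1_def H2_def ImM_def by (simp add: cscale_def vec_eq_iff field_simps)
  have aR: "adj R = H1 + cscale (- \<i>) H2"
    unfolding H1_def H2_def ImM_def by (simp add: adj_def cscale_def vec_eq_iff field_simps)
  have "S (adj R) = S H1 + cscale (- \<i>) (S H2)" by (simp add: aR S_add S_cscale)
  also have "\<dots> = adj (S H1 + cscale \<i> (S H2))"
    using S_herm[OF h1] S_herm[OF h2] by (simp add: adj_add adj_cscale hermitian_def)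
  also have "\<dots> = adj (S R)" by (simp add: R S_add S_cscale)
  finally show ?thesis .
qed

lemma S_ImM: "S (ImM R) = ImM (S R)"
  unfolding ImM_def by (simp add: S_cscale S_diff S_adj)

end




lemma mv_linear: "linear (\<lambda>x. (R::complex^'n^'n) *v x)"
proof (rule linearI)
  fix x y show "R *v (x + y) = R *v x + R *v y" by (rule matrix_vector_right_distrib)
next
  fix r :: real and x :: "complex^'n"
  show "R *v (r *\<^sub>R x) = r *\<^sub>R (R *v x)"
    unfolding vec_eq_iff matrix_vector_mult_def
    by (simp only: vector_scaleR_component vec_lambda_beta) (simp add: scaleR_conv_of_real sum_distrib_left algebra_simps)
qed

lemma mv_blin: "bounded_linear (\<lambda>x. (R::complex^'n^'n) *v x)"
  using mv_linear by (rule linear_conv_bounded_linear[THEN iffD1])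

lemma opn_bound: "norm (R *v x) \<le> opnorm2 R * norm x"
  unfolding opnorm2_def by (rule onorm[OF mv_blin])

lemma opn_nonneg: "0 \<le> opnorm2 R"
  unfolding opnorm2_def by (rule onorm_pos_le[OF mv_blin])

lemma opn_le: "(\<And>x. norm (R *v x) \<le> b * norm x) \<Longrightarrow> 0 \<le> b \<Longrightarrow> opnorm2 R \<le> b"
  unfolding opnorm2_def by (rule onorm_bound)

lemma norm_le_sum_cart: "norm (x::'a::real_normed_vector^'n) \<le> (\<Sum>i\<in>UNIV. norm (x$i))"
  unfolding norm_vec_def by (rule L2_set_le_sum) simp

lemma opn_le_frob: "opnorm2 (R::complex^'n^'n) \<le> real CARD('n) * real CARD('n) * norm R"
proof (rule opn_le)
  fix x
  have "norm (R *v x) \<le> (\<Sum>i\<in>UNIV. norm ((R *v x)$i))" by (rule norm_le_sum_cart)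
  also have "\<dots> \<le> (\<Sum>i\<in>(UNIV::'n set). \<Sum>j\<in>(UNIV::'n set). norm R * norm x)"
  proof (intro sum_mono)
    fix i
    have "norm ((R *v x)$i) \<le> (\<Sum>j\<in>UNIV. norm (R$i$j * x$j))"
      unfolding matrix_vector_mult_def by (simp add: norm_sum)
    also have "\<dots> \<le> (\<Sum>j\<in>(UNIV::'n set). norm R * norm x)"
    proof (intro sum_mono)
      fix j
      have "norm (R$i$j) \<le> norm R"
        using Finite_Cartesian_Product.norm_nth_le[of "R$i" j] Finite_Cartesian_Product.norm_nth_le[of R i] by linarith
      then show "norm (R$i$j * x$j) \<le> norm R * norm x"
        by (simp add: norm_mult mult_mono Finite_Cartesian_Product.norm_nth_le)
    qed
    finally show "norm ((R *v x)$i) \<le> (\<Sum>j\<in>(UNIV::'n set). norm R * norm x)" .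
  qed
  also have "\<dots> = real CARD('n) * real CARD('n) * norm R * norm x" by simp
  finally show "norm (R *v x) \<le> real CARD('n) * real CARD('n) * norm R * norm x" .
qed simp

lemma norm_axis_c: "norm (axis j (1::complex) :: complex^'n) = 1"
proof -
  have "(\<Sum>i\<in>(UNIV::'n set). (norm (axis j (1::complex) $ i))^2) = (\<Sum>i\<in>(UNIV::'n set). if i = j then 1 else 0)"
    by (rule sum.cong) (auto simp: axis_def)
  then show ?thesis unfolding norm_vec_def L2_set_def by simp
qed

lemma frob_le_opn: "norm (R::complex^'n^'n) \<le> real CARD('n) * real CARD('n) * opnorm2 R"
proof -
  have entry: "norm (R$i$j) \<le> opnorm2 R" for i j
  proof -
    have "(R *v axis j 1)$i = R$i$j"
      by (simp add: matrix_vector_mult_def axis_def if_distrib cong: if_cong)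
    then have "norm (R$i$j) \<le> norm (R *v axis j 1)"
      using Finite_Cartesian_Product.norm_nth_le[of "R *v axis j 1" i] by simp
    also have "\<dots> \<le> opnorm2 R * norm (axis j (1::complex))" by (rule opn_bound)
    finally show ?thesis by (simp add: norm_axis_c)
  qed
  have "norm R \<le> (\<Sum>i\<in>UNIV. norm (R$i))" by (rule norm_le_sum_cart)
  also have "\<dots> \<le> (\<Sum>i\<in>(UNIV::'n set). \<Sum>j\<in>(UNIV::'n set). opnorm2 R)"
    by (intro sum_mono order_trans[OF norm_le_sum_cart] entry)
  also have "\<dots> = real CARD('n) * real CARD('n) * opnorm2 R" by simp
  finally show ?thesis .
qed

lemma opn_scaleR: "opnorm2 (r *\<^sub>R R) = \<bar>r\<bar> * opnorm2 R"
proof -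
  have "(\<lambda>x. (r *\<^sub>R R) *v x) = (\<lambda>x. r *\<^sub>R (R *v x))"
    by (simp add: fun_eq_iff vec_eq_iff matrix_vector_mult_def scaleR_sum_right)
  then show ?thesis unfolding opnorm2_def by (simp add: onorm_scaleR[OF mv_blin])
qed

lemma cI_mv: "cscale z (mat 1) *v x = (\<chi> i. z * x$i)"
proof -
  have e: "(\<Sum>j\<in>UNIV. z * (if i = j then 1 else 0) * x$j) = z * x$i" for i
  proof -
    have "(\<Sum>j\<in>UNIV. z * (if i = j then 1 else 0) * x$j) = (\<Sum>j\<in>UNIV. if i = j then z * x$j else 0)"
      by (rule sum.cong) auto
    then show ?thesis by simp
  qed
  show ?thesis unfolding vec_eq_iff matrix_vector_mult_def cscale_def mat_def
    by (simp only: vec_lambda_beta e) simp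
qed

lemma norm_cI_mv: "norm (cscale z (mat 1) *v (x::complex^'n)) = cmod z * norm x"
  unfolding cI_mv norm_vec_def by (simp add: norm_mult L2_set_right_distrib)

lemma opn_MDE: "opnorm2 (cscale z (mat 1) - A + T) \<le> cmod z + opnorm2 A + opnorm2 (T::complex^'n^'n)"
proof (rule opn_le)
  fix x
  have "(cscale z (mat 1) - A + T) *v x = cscale z (mat 1) *v x - A *v x + T *v x"
    by (simp add: matrix_vector_mult_add_rdistrib matrix_vector_mult_diff_rdistrib)
  then have "norm ((cscale z (mat 1) - A + T) *v x) \<le> norm (cscale z (mat 1) *v x) + norm (A *v x) + norm (T *v x)"
    using norm_triangle_ineq[of "cscale z (mat 1) *v x - A *v x" "T *v x"]
      norm_triangle_ineq4[of "cscale z (mat 1) *v x" "A *v x"] by simp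
  also have "\<dots> \<le> cmod z * norm x + opnorm2 A * norm x + opnorm2 T * norm x"
    by (intro add_mono opn_bound) (simp add: norm_cI_mv)
  finally show "norm ((cscale z (mat 1) - A + T) *v x) \<le> (cmod z + opnorm2 A + opnorm2 T) * norm x"
    by (simp add: algebra_simps)
qed (intro add_nonneg_nonneg opn_nonneg norm_ge_zero)

lemma opn_uminus: "opnorm2 (- R) = opnorm2 (R::complex^'n^'n)"
  using opn_scaleR[of "-1" R] by simp




lemma opn_zero: "opnorm2 (0::complex^'n^'n) = 0"
  using opn_le_frob[of "0::complex^'n^'n"] opn_nonneg[of "0::complex^'n^'n"] by simp

lemma opnS_bound:
  fixes S :: "complex^'n^'n \<Rightarrow> complex^'n^'n"
  assumes dp: "data_pair A S"
  shows "opnorm2 (S R) \<le> opnorm_S S * opnorm2 R"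
proof -
  let ?C = "real CARD('n) * real CARD('n)"
  obtain K where K: "\<And>R. norm (S R) \<le> norm R * K" "0 < K"
    using bounded_linear.pos_bounded[OF S_blin[OF dp]] by blast
  have bdd: "bdd_above ((\<lambda>R. opnorm2 (S R)) ` {R. opnorm2 R \<le> 1})"
  proof (rule bdd_aboveI2)
    fix R :: "complex^'n^'n" assume "R \<in> {R. opnorm2 R \<le> 1}"
    then have r1: "opnorm2 R \<le> 1" by simp
    have "opnorm2 (S R) \<le> ?C * norm (S R)" by (rule opn_le_frob)
    also have "\<dots> \<le> ?C * (norm R * K)" by (intro mult_left_mono K) simp
    also have "\<dots> \<le> ?C * ((?C * opnorm2 R) * K)"
      by (intro mult_left_mono mult_right_mono frob_le_opn) (use K in auto)
    also have "\<dots> \<le> ?C * ((?C * 1) * K)"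
      by (intro mult_left_mono mult_right_mono r1) (use K in auto)
    finally show "opnorm2 (S R) \<le> ?C * (?C * 1 * K)" .
  qed
  show ?thesis
  proof (cases "opnorm2 R = 0")
    case True
    then have "norm R \<le> 0" using frob_le_opn[of R] by simp
    then have "R = 0" by simp
    then show ?thesis using True by (simp add: S_zero[OF dp] opn_zero)
  next
    case False
    define r where "r = opnorm2 R"
    have rpos: "0 < r" using False opn_nonneg[of R] unfolding r_def by linarith
    have "opnorm2 ((1/r) *\<^sub>R R) = 1" using rpos by (simp add: opn_scaleR r_def)
    then have "opnorm2 (S ((1/r) *\<^sub>R R)) \<le> opnorm_S S"
      unfolding opnorm_S_def by (intro cSUP_upper bdd) simp
    moreover have "S ((1/r) *\<^sub>R R) = (1/r) *\<^sub>R S R"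
      using linear_scale[OF S_linear[OF dp]] .
    ultimately have "(1/r) * opnorm2 (S R) \<le> opnorm_S S"
      using rpos by (simp add: opn_scaleR)
    then show ?thesis using rpos unfolding r_def[symmetric] by (simp add: field_simps)
  qed
qed

lemma measure_of_borel_emeasure:
  fixes g :: "real set \<Rightarrow> real"
  assumes g0: "g {} = 0" and gpos: "\<And>B. B \<in> sets borel \<Longrightarrow> 0 \<le> g B"
    and gsum: "\<And>F. range F \<subseteq> sets borel \<Longrightarrow> disjoint_family F \<Longrightarrow> (\<lambda>k. g (F k)) sums g (\<Union>k. F k)"
    and B: "B \<in> sets borel"
  shows "emeasure (measure_of UNIV (sets borel) (\<lambda>B. ennreal (g B))) B = ennreal (g B)"
proof (rule emeasure_measure_of_sigma)
  show "sigma_algebra UNIV (sets borel)"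
    using sets.sigma_algebra_axioms[of borel] by simp
  show "positive (sets borel) (\<lambda>B. ennreal (g B))"
    unfolding positive_def using g0 by simp
  show "countably_additive (sets borel) (\<lambda>B. ennreal (g B))"
    unfolding countably_additive_def
  proof (intro allI impI)
    fix F :: "nat \<Rightarrow> real set"
    assume F: "range F \<subseteq> sets borel" and d: "disjoint_family F"
    have s: "(\<lambda>k. g (F k)) sums g (\<Union>k. F k)" by (rule gsum[OF F d])
    have "(\<Sum>i. ennreal (g (F i))) = ennreal (\<Sum>i. g (F i))"
      by (rule suminf_ennreal2) (use F gpos s in \<open>auto simp: sums_iff\<close>)
    also have "(\<Sum>i. g (F i)) = g (\<Union>k. F k)" using s by (simp add: sums_iff)
    finally show "(\<Sum>i. ennreal (g (F i))) = ennreal (g (\<Union>k. F k))" .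
  qed
qed (rule B)

lemma sets_mob: "sets (measure_of UNIV (sets borel) f) = (sets borel :: real set set)"
  by (metis sets_measure_of sets.space_closed sets.sigma_sets_eq space_borel)

lemma space_mob: "space (measure_of UNIV (sets borel) f) = (UNIV :: real set)"
  by (simp add: space_measure_of_conv)




lemma ip_axis_left: "ip (axis i c) y = cnj c * y$i"
proof -
  have "ip (axis i c) y = (\<Sum>k\<in>UNIV. if k = i then cnj c * y$i else 0)"
    unfolding ip_def by (rule sum.cong) (auto simp: axis_def)
  then show ?thesis by simp
qed

lemma mv_axis: "(R *v axis j t)$k = R$k$j * t"
proof -
  have "(R *v axis j t)$k = (\<Sum>l\<in>UNIV. R$k$l * axis j t $ l)"
    by (simp add: matrix_vector_mult_def)
  also have "\<dots> = (\<Sum>l\<in>UNIV. if l = j then R$k$j * t else 0)"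
    by (rule sum.cong) (auto simp: axis_def)
  finally show ?thesis by simp
qed

lemma ip_add_left: "ip (u + v) w = ip u w + ip v w"
  by (simp add: ip_def algebra_simps sum.distrib)
lemma ip_add_right: "ip u (v + w) = ip u v + ip u w"
  by (simp add: ip_def algebra_simps sum.distrib)

lemma qf_axis: "qf (axis i c) R = cnj c * R$i$i * c"
  by (simp add: qf_ip ip_axis_left mv_axis mult.assoc)

lemma psd_diag: "psd R \<Longrightarrow> 0 \<le> Re (R$i$i) \<and> Im (R$i$i) = 0"
  using psd_Re[of R "axis i 1"] herm_qf_real[of R "axis i 1"] by (simp add: qf_axis psd_def)

lemma psd_zero_diag:
  assumes p: "psd R" and d: "\<And>i. R$i$i = 0"
  shows "R = 0"
proof -
  have "R$i$j = 0" for i j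
  proof (cases "i = j")
    case True then show ?thesis using d by simp
  next
    case False
    define a where "a = R$i$j"
    define t where "t = - cnj a"
    have "adj R $ j $ i = R $ j $ i" using p unfolding psd_def hermitian_def by simp
    then have h: "R$j$i = cnj a" unfolding a_def by (simp add: adj_def)
    have e: "qf (axis i 1 + axis j t) R = R$i$j * t + cnj t * R$j$i"
      unfolding qf_ip by (simp add: matrix_vector_right_distrib ip_add_left ip_add_right
        ip_axis_left mv_axis d)
    have "Re (qf (axis i 1 + axis j t) R) = - 2 * ((Re a)^2 + (Im a)^2)"
      unfolding e unfolding t_def h a_def[symmetric] by (simp add: power2_eq_square)
    then have "0 \<le> - 2 * ((Re a)^2 + (Im a)^2)"
      using psd_Re[OF p, of "axis i 1 + axis j t"] by simp
    then have "(Re a)^2 + (Im a)^2 \<le> 0" by simp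
    then have "Re a = 0 \<and> Im a = 0" by (simp add: sum_power2_le_zero_iff)
    then show ?thesis unfolding a_def by (simp add: complex_eq_iff)
  qed
  then show ?thesis by (simp add: vec_eq_iff)
qed

lemma qfRe_linear: "linear (\<lambda>R. Re (qf x R))"
  by (rule linearI) (simp_all add: qf_add scaleR_cscale qf_cscale)

lemma qfRe_blin: "bounded_linear (\<lambda>R::complex^'n^'n. Re (qf x R))"
  using qfRe_linear by (rule linear_conv_bounded_linear[THEN iffD1])

lemma mtrace_Re_linear: "linear (\<lambda>R::complex^'n^'n. Re (mtrace R) / real CARD('n))"
  by (rule linearI) (simp_all add: mtrace_def scaleR_cscale cscale_def sum.distrib add_divide_distrib
     flip: sum_distrib_left)

lemma mtrace_Re_blin: "bounded_linear (\<lambda>R::complex^'n^'n. Re (mtrace R) / real CARD('n))"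
  using mtrace_Re_linear by (rule linear_conv_bounded_linear[THEN iffD1])

context
  fixes V :: "real set \<Rightarrow> complex^'n^'n"
  assumes pm: "psd_matrix_measure V"
begin

lemma V_psd: "B \<in> sets borel \<Longrightarrow> psd (V B)" using pm by (simp add: psd_matrix_measure_def)
lemma V_empty: "V {} = 0" using pm by (simp add: psd_matrix_measure_def)
lemma V_sums: "range F \<subseteq> sets borel \<Longrightarrow> disjoint_family F \<Longrightarrow> (\<lambda>k. V (F k)) sums V (\<Union>k. F k)"
  using pm by (simp add: psd_matrix_measure_def)

lemma emeasure_qm: "B \<in> sets borel \<Longrightarrow> emeasure (qmeasure V x) B = ennreal (Re (qf x (V B)))"
  unfolding qmeasure_def
proof (rule measure_of_borel_emeasure)
  show "Re (qf x (V {})) = 0" by (simp add: V_empty qf_zero)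
  show "\<And>B. B \<in> sets borel \<Longrightarrow> 0 \<le> Re (qf x (V B))" using V_psd psd_Re by blast
  show "\<And>F. range F \<subseteq> sets borel \<Longrightarrow> disjoint_family F \<Longrightarrow>
      (\<lambda>k. Re (qf x (V (F k)))) sums Re (qf x (V (\<Union>k. F k)))"
    by (rule bounded_linear.sums[OF qfRe_blin V_sums])
qed

lemma emeasure_dos: "B \<in> sets borel \<Longrightarrow> emeasure (dos V) B = ennreal (Re (mtrace (V B)) / real CARD('n))"
  unfolding dos_def
proof (rule measure_of_borel_emeasure)
  show "Re (mtrace (V {})) / real CARD('n) = 0" by (simp add: V_empty mtrace_def)
  show "\<And>B. B \<in> sets borel \<Longrightarrow> 0 \<le> Re (mtrace (V B)) / real CARD('n)"
    unfolding mtrace_def using V_psd psd_diag by (auto intro!: divide_nonneg_nonneg sum_nonneg)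
  show "\<And>F. range F \<subseteq> sets borel \<Longrightarrow> disjoint_family F \<Longrightarrow>
      (\<lambda>k. Re (mtrace (V (F k))) / real CARD('n)) sums (Re (mtrace (V (\<Union>k. F k))) / real CARD('n))"
    by (rule bounded_linear.sums[OF mtrace_Re_blin V_sums])
qed

lemma qm_null:
  assumes B: "B \<in> sets borel" and z: "emeasure (dos V) B = 0"
  shows "emeasure (qmeasure V x) B = 0"
proof -
  have p: "psd (V B)" by (rule V_psd[OF B])
  have "Re (mtrace (V B)) / real CARD('n) \<le> 0" using z emeasure_dos[OF B] by (simp add: ennreal_eq_0_iff)
  then have le: "(\<Sum>i\<in>UNIV. Re (V B $ i $ i)) \<le> 0" by (simp add: mtrace_def divide_le_0_iff)
  have "Re (V B $ i $ i) = 0" for i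
  proof -
    have "Re (V B $ i $ i) \<le> (\<Sum>i\<in>UNIV. Re (V B $ i $ i))"
      by (rule member_le_sum) (use psd_diag[OF p] in auto)
    then show ?thesis using le psd_diag[OF p, of i] by linarith
  qed
  then have "\<And>i. V B $ i $ i = 0" using psd_diag[OF p] by (simp add: complex_eq_iff)
  then have "V B = 0" by (rule psd_zero_diag[OF p])
  then show ?thesis using emeasure_qm[OF B] by (simp add: qf_zero)
qed

end



context
  fixes V :: "real set \<Rightarrow> complex^'n^'n"
  assumes pm: "psd_matrix_measure V" and VU: "V UNIV = mat 1"
begin

lemma sets_qm: "sets (qmeasure V x) = sets borel"
  unfolding qmeasure_def by (rule sets_mob)
lemma space_qm: "space (qmeasure V x) = UNIV"
  unfolding qmeasure_def by (rule space_mob)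

lemma qm_UNIV: "emeasure (qmeasure V x) UNIV = ennreal ((norm x)^2)"
  using emeasure_qm[OF pm, of UNIV x] by (simp add: VU qf_mat1)

lemma qm_finite: "finite_measure (qmeasure V x)"
  by (rule finite_measureI) (simp add: space_qm qm_UNIV)

lemma qm_measure_UNIV: "measure (qmeasure V x) UNIV = (norm x)^2"
  by (simp add: measure_def qm_UNIV)

lemma supp_null: "\<exists>N. N \<in> null_sets (qmeasure V x) \<and> UNIV - msupp (dos V) \<subseteq> N"
proof -
  define F where "F = {ball \<tau> e | \<tau> e. 0 < e \<and> emeasure (dos V) (ball \<tau> e) = 0}"
  have "\<And>S. S \<in> F \<Longrightarrow> open S" unfolding F_def by auto
  then obtain F' where F': "F' \<subseteq> F" "countable F'" "\<Union>F' = \<Union>F" by (rule Lindelof)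
  have "(\<Union>S\<in>F'. S) \<in> null_sets (qmeasure V x)"
  proof (rule null_sets_UN'[OF F'(2)])
    fix S assume "S \<in> F'"
    then have "S \<in> F" using F' by auto
    then obtain \<tau> e where S: "S = ball \<tau> e" "emeasure (dos V) (ball \<tau> e) = 0" unfolding F_def by auto
    have b: "S \<in> sets borel" unfolding S by simp
    show "S \<in> null_sets (qmeasure V x)"
      using qm_null[OF pm b] S by (auto simp: sets_qm)
  qed
  moreover have "UNIV - msupp (dos V) \<subseteq> (\<Union>S\<in>F'. S)"
  proof
    fix \<tau> assume "\<tau> \<in> UNIV - msupp (dos V)"
    then obtain e where e: "0 < e" "\<not> emeasure (dos V) (ball \<tau> e) > 0" unfolding msupp_def by auto
    then have "ball \<tau> e \<in> F" unfolding F_def by (auto simp: not_gr_zero)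
    then have "\<tau> \<in> \<Union>F" by (rule UnionI) (simp add: e(1))
    then show "\<tau> \<in> (\<Union>S\<in>F'. S)" using F'(3) by auto
  qed
  ultimately show ?thesis by blast
qed

lemma supp_nonempty: "msupp (dos V) \<noteq> {}"
proof
  assume E: "msupp (dos V) = {}"
  define x where "x = (axis undefined 1 :: complex^'n)"
  obtain N where N: "N \<in> null_sets (qmeasure V x)" "UNIV - msupp (dos V) \<subseteq> N" using supp_null by blast
  have "emeasure (qmeasure V x) UNIV \<le> emeasure (qmeasure V x) N"
    using N E by (intro emeasure_mono) (auto simp: null_sets_def)
  also have "\<dots> = 0" using N by auto
  finally have "emeasure (qmeasure V x) UNIV = 0" by simp
  then show False by (simp add: qm_UNIV x_def norm_axis_c)
qed

lemma d_ge: assumes "0 < Im z" shows "Im z \<le> d_rho (dos V) z"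
proof -
  have ne: "complex_of_real ` msupp (dos V) \<noteq> {}" using supp_nonempty by simp
  show ?thesis
    unfolding d_rho_def infdist_notempty[OF ne]
  proof (rule cINF_greatest[OF ne])
    fix w assume "w \<in> complex_of_real ` msupp (dos V)"
    then obtain s where "w = complex_of_real s" by auto
    have "\<bar>Im (z - w)\<bar> \<le> dist z w" unfolding dist_complex_def by (rule abs_Im_le_cmod)
    then show "Im z \<le> dist z w" using \<open>w = _\<close> assms by simp
  qed
qed

lemma Im_qf_bound:
  assumes z: "0 < Im z" and eq: "qf x Mz = (LINT \<tau>|qmeasure V x. 1 / (complex_of_real \<tau> - z))"
  shows "Im (qf x Mz) \<le> Im z / (d_rho (dos V) z)^2 * (norm x)^2"
proof -
  let ?\<mu> = "qmeasure V x"
  let ?d = "d_rho (dos V) z"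
  let ?f = "\<lambda>\<tau>::real. 1 / (complex_of_real \<tau> - z)"
  interpret fm: finite_measure ?\<mu> by (rule qm_finite)
  have dpos: "0 < ?d" using d_ge[OF z] z by linarith
  have nz: "complex_of_real \<tau> - z \<noteq> 0" for \<tau> using z by (auto simp: complex_eq_iff)
  have meas: "?f \<in> borel_measurable ?\<mu>"
  proof -
    have "?f \<in> borel_measurable borel"
      by (intro borel_measurable_continuous_onI continuous_intros) (use nz in auto)
    moreover have "borel_measurable ?\<mu> = borel_measurable borel"
      by (rule measurable_cong_sets[OF sets_qm refl])
    ultimately show ?thesis by metis
  qed
  have bnd: "norm (?f \<tau>) \<le> 1 / Im z" for \<tau>
  proof -
    have "Im z \<le> cmod (complex_of_real \<tau> - z)"
      using abs_Im_le_cmod[of "complex_of_real \<tau> - z"] by simp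
    then show ?thesis using z by (simp add: norm_divide frac_le)
  qed
  have int: "integrable ?\<mu> ?f"
    by (rule fm.integrable_const_bound[where B="1 / Im z"]) (use bnd meas in auto)
  have "Im (qf x Mz) = (LINT \<tau>|?\<mu>. Im (?f \<tau>))"
    unfolding eq by (rule integral_Im[OF int, symmetric])
  also have "\<dots> \<le> (LINT \<tau>|?\<mu>. Im z / ?d^2)"
  proof (rule integral_mono_AE)
    show "integrable ?\<mu> (\<lambda>\<tau>. Im (?f \<tau>))" using int by auto
    show "integrable ?\<mu> (\<lambda>\<tau>. Im z / ?d^2)" by simp
    obtain N where N: "N \<in> null_sets ?\<mu>" "UNIV - msupp (dos V) \<subseteq> N" using supp_null by blast
    show "AE \<tau> in ?\<mu>. Im (?f \<tau>) \<le> Im z / ?d^2"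
    proof (rule AE_I'[OF N(1)])
      show "{\<tau> \<in> space ?\<mu>. \<not> Im (?f \<tau>) \<le> Im z / ?d^2} \<subseteq> N"
      proof
        fix \<tau> assume "\<tau> \<in> {\<tau> \<in> space ?\<mu>. \<not> Im (?f \<tau>) \<le> Im z / ?d^2}"
        then have nle: "\<not> Im (?f \<tau>) \<le> Im z / ?d^2" by simp
        show "\<tau> \<in> N"
        proof (rule ccontr)
          assume "\<tau> \<notin> N"
          then have "\<tau> \<in> msupp (dos V)" using N(2) by auto
          then have "?d \<le> dist z (complex_of_real \<tau>)"
            unfolding d_rho_def by (intro infdist_le) auto
          then have "?d^2 \<le> (dist z (complex_of_real \<tau>))^2"
            using dpos by (intro power_mono) auto
          also have "(dist z (complex_of_real \<tau>))^2 = (Re z - \<tau>)^2 + (Im z)^2"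
            by (simp add: dist_complex_def cmod_def)
          finally have le: "?d^2 \<le> (Re z - \<tau>)^2 + (Im z)^2" .
          have "Im (?f \<tau>) = Im z / ((Re z - \<tau>)^2 + (Im z)^2)"
            by (simp add: Im_divide power2_eq_square algebra_simps)
          also have "\<dots> \<le> Im z / ?d^2"
          proof (rule divide_left_mono)
            show "?d^2 \<le> (Re z - \<tau>)^2 + (Im z)^2" by (rule le)
            show "0 \<le> Im z" using z by simp
            have "0 < ?d^2" using dpos by simp
            moreover have "0 < (Re z - \<tau>)^2 + (Im z)^2" using z by (simp add: add_nonneg_pos)
            ultimately show "0 < ((Re z - \<tau>)^2 + (Im z)^2) * ?d^2" by simp
          qed
          finally show False using nle by simp
        qed
      qed
    qed
  qed
  also have "\<dots> = Im z / ?d^2 * (norm x)^2"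
    by (simp add: space_qm qm_measure_UNIV)
  finally show ?thesis .
qed

end



lemma inv_props:
  assumes "invertible (R::complex^'n^'n)"
  shows "matrix_inv R ** R = mat 1" "R ** matrix_inv R = mat 1"
proof -
  have "\<exists>A'. R ** A' = mat 1 \<and> A' ** R = mat 1" using assms unfolding invertible_def by blast
  then have "R ** matrix_inv R = mat 1 \<and> matrix_inv R ** R = mat 1"
    unfolding matrix_inv_def by (rule someI_ex)
  then show "matrix_inv R ** R = mat 1" "R ** matrix_inv R = mat 1" by auto
qed

lemma pd_psd: "pd R \<Longrightarrow> psd R"
  unfolding pd_def psd_def
proof (intro conjI allI; elim conjE)
  fix x assume "\<forall>x. x \<noteq> 0 \<longrightarrow> 0 < Re (qf x R)"
  then show "0 \<le> Re (qf x R)" by (cases "x = 0") (auto simp: qf_alt less_imp_le)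
qed

lemma qf_cI_real: "Re (qf x (cscale (complex_of_real c) (mat 1))) = c * (norm x)^2"
  by (simp add: qf_cscale qf_mat1)

lemma key_lower:
  fixes A :: "complex^'n^'n" and S and Mz :: "complex^'n^'n"
  assumes dp: "data_pair A S" and inv: "invertible Mz"
    and eq: "- matrix_inv Mz = cscale z (mat 1) - A + S Mz"
    and pdM: "pd (ImM Mz)"
  shows "Im z * (norm (Mz *v x))^2 \<le> Re (qf x (ImM Mz))"
proof -
  define N where "N = matrix_inv Mz"
  define y where "y = Mz *v x"
  have NM: "N ** Mz = mat 1" unfolding N_def by (rule inv_props(1)[OF inv])
  have "adj Mz ** adj N ** Mz = Mz"
    by (simp add: adj_mult[symmetric] NM adj_mat1)
  then have "qf x Mz = qf y (adj N)" unfolding y_def by (metis qf_sandwich)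
  also have "\<dots> = cnj (qf y N)" by (rule qf_adj)
  finally have "Im (qf x Mz) = Im (qf y (- N))" by (simp add: qf_uminus)
  also have "\<dots> = Im (qf y (cscale z (mat 1))) - Im (qf y A) + Im (qf y (S Mz))"
    unfolding N_def eq by (simp add: qf_add qf_diff)
  also have "Im (qf y (cscale z (mat 1))) = Im z * (norm y)^2"
    by (simp add: qf_cscale qf_mat1)
  finally have e: "Re (qf x (ImM Mz)) = Im z * (norm y)^2 - Im (qf y A) + Im (qf y (S Mz))"
    by (simp add: qf_ImM)
  have "psd (0 - ImM A)" using dp unfolding data_pair_def loewner_le_def by simp
  then have "0 \<le> Re (qf y (0 - ImM A))" by (rule psd_Re)
  then have a: "Im (qf y A) \<le> 0" by (simp add: qf_diff qf_zero qf_uminus qf_ImM)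
  have "psd (ImM Mz)" using pdM by (rule pd_psd)
  then have "psd (S (ImM Mz))" by (rule S_psd[OF dp])
  then have "0 \<le> Re (qf y (S (ImM Mz)))" by (rule psd_Re)
  then have b: "0 \<le> Im (qf y (S Mz))" by (simp add: S_ImM[OF dp] qf_ImM)
  show ?thesis using e a b unfolding y_def by linarith
qed




lemma pointwise:
  fixes A :: "complex^'n^'n"
    and S :: "complex^'n^'n \<Rightarrow> complex^'n^'n"
    and M :: "complex \<Rightarrow> complex^'n^'n"
    and V :: "real set \<Rightarrow> complex^'n^'n"
  assumes dp: "data_pair A S"
    and mde: "solves_MDE A S M"
    and pm: "psd_matrix_measure V" and VU: "V UNIV = mat 1"
    and st: "stieltjes_rep V M"
    and z: "0 < Im z"
  shows "opnorm2 (M z) \<le> 1 / d_rho (dos V) z \<and>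
            loewner_le (cscale (complex_of_real (Im z / (opnorm2 (matrix_inv (M z)))\<^sup>2)) (mat 1))
                       (ImM (M z)) \<and>
            loewner_le (ImM (M z))
                       (cscale (complex_of_real (Im z / (d_rho (dos V) z)\<^sup>2)) (mat 1)) \<and>
            opnorm2 (matrix_inv (M z)) \<le> cmod z + opnorm2 A + opnorm_S S * opnorm2 (M z) \<and>
            rho_ext M z \<le> Im z / (pi * (d_rho (dos V) z)\<^sup>2)"
proof -
  define Mz where "Mz = M z"
  define N where "N = matrix_inv Mz"
  define d where "d = d_rho (dos V) z"
  have inv: "invertible Mz" and eq: "- N = cscale z (mat 1) - A + S Mz" and pdM: "pd (ImM Mz)"
    using mde z unfolding solves_MDE_def Mz_def N_def by auto
  have dpos: "0 < d" using d_ge[OF pm VU z] z unfolding d_def by linarith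
  have low: "Im z * (norm (Mz *v x))^2 \<le> Re (qf x (ImM Mz))" for x
    by (rule key_lower[OF dp inv eq[unfolded N_def] pdM])
  have up: "Re (qf x (ImM Mz)) \<le> Im z / d^2 * (norm x)^2" for x
  proof -
    have "qf x Mz = (LINT \<tau>|qmeasure V x. 1 / (complex_of_real \<tau> - z))"
      using st z unfolding stieltjes_rep_def Mz_def by auto
    from Im_qf_bound[OF pm VU z this] show ?thesis unfolding d_def by (simp add: qf_ImM)
  qed
  have nb: "norm (Mz *v x) \<le> 1 / d * norm x" for x
  proof -
    have "Im z * (norm (Mz *v x))^2 \<le> Im z * (norm x / d)^2"
      using low[of x] up[of x] by (simp add: power_divide)
    then have "(norm (Mz *v x))^2 \<le> (norm x / d)^2" using z by simp
    then have "norm (Mz *v x) \<le> norm x / d"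
      by (rule power2_le_imp_le) (use dpos in simp)
    then show ?thesis by simp
  qed
  have c1: "opnorm2 Mz \<le> 1 / d"
    by (rule opn_le[OF nb]) (use dpos in simp)
  have c2: "loewner_le (cscale (complex_of_real (Im z / (opnorm2 N)\<^sup>2)) (mat 1)) (ImM Mz)"
    unfolding loewner_le_def psd_def
  proof (intro conjI allI)
    show "hermitian (ImM Mz - cscale (complex_of_real (Im z / (opnorm2 N)\<^sup>2)) (mat 1))"
      by (intro herm_diff ImM_herm herm_cscale_real herm_mat1)
    fix x
    have "Im z / (opnorm2 N)\<^sup>2 * (norm x)^2 \<le> Re (qf x (ImM Mz))"
    proof (cases "opnorm2 N = 0")
      case True
      then show ?thesis using low[of x] z by simp (smt (verit) mult_nonneg_nonneg zero_le_power2)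
    next
      case False
      then have pos: "0 < opnorm2 N" using opn_nonneg[of N] by linarith
      have "x = N *v (Mz *v x)"
        by (simp add: matrix_vector_mul_assoc N_def inv_props(1)[OF inv])
      then have "norm x \<le> opnorm2 N * norm (Mz *v x)" by (metis opn_bound)
      then have "(norm x)^2 \<le> (opnorm2 N * norm (Mz *v x))^2"
        by (intro power_mono) auto
      then have "(norm x)^2 / (opnorm2 N)^2 \<le> (norm (Mz *v x))^2"
        using pos by (simp add: power_mult_distrib divide_le_eq mult.commute)
      then have "Im z * ((norm x)^2 / (opnorm2 N)^2) \<le> Im z * (norm (Mz *v x))^2"
        using z by (intro mult_left_mono) auto
      then show ?thesis using low[of x] by (simp add: field_simps)
    qed
    then show "0 \<le> Re (qf x (ImM Mz - cscale (complex_of_real (Im z / (opnorm2 N)\<^sup>2)) (mat 1)))"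
      by (simp only: qf_diff minus_complex.sel qf_cI_real)
  qed
  have c3: "loewner_le (ImM Mz) (cscale (complex_of_real (Im z / d\<^sup>2)) (mat 1))"
    unfolding loewner_le_def psd_def
  proof (intro conjI allI)
    show "hermitian (cscale (complex_of_real (Im z / d\<^sup>2)) (mat 1) - ImM Mz)"
      by (intro herm_diff ImM_herm herm_cscale_real herm_mat1)
    fix x
    show "0 \<le> Re (qf x (cscale (complex_of_real (Im z / d\<^sup>2)) (mat 1) - ImM Mz))"
      using up[of x] by (simp only: qf_diff minus_complex.sel qf_cI_real)
  qed
  have c4: "opnorm2 N \<le> cmod z + opnorm2 A + opnorm_S S * opnorm2 Mz"
  proof -
    have "opnorm2 N = opnorm2 (- N)" by (simp add: opn_uminus)
    also have "\<dots> \<le> cmod z + opnorm2 A + opnorm2 (S Mz)" unfolding eq by (rule opn_MDE)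
    also have "\<dots> \<le> cmod z + opnorm2 A + opnorm_S S * opnorm2 Mz"
      using opnS_bound[OF dp] by simp
    finally show ?thesis .
  qed
  have c5: "rho_ext M z \<le> Im z / (pi * d\<^sup>2)"
  proof -
    have diag: "Re ((ImM Mz)$i$i) \<le> Im z / d^2" for i
      using up[of "axis i 1"] by (simp add: qf_axis norm_axis_c)
    have "Re (mtrace (ImM Mz)) = (\<Sum>i\<in>UNIV. Re ((ImM Mz)$i$i))" by (simp add: mtrace_def)
    also have "\<dots> \<le> (\<Sum>i\<in>(UNIV::'n set). Im z / d^2)" by (intro sum_mono diag)
    also have "\<dots> = real CARD('n) * (Im z / d^2)" by simp
    finally have tr: "Re (mtrace (ImM Mz)) / real CARD('n) \<le> Im z / d^2"
      by (simp add: divide_le_eq mult.commute)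
    have "rho_ext M z = (Re (mtrace (ImM Mz)) / real CARD('n)) / pi"
      unfolding rho_ext_def Mz_def by simp
    also have "\<dots> \<le> (Im z / d^2) / pi"
      using tr by (intro divide_right_mono) auto
    finally show ?thesis by (simp add: mult.commute)
  qed
  show ?thesis using c1 c2 c3 c4 c5 unfolding Mz_def N_def d_def by simp
qed

theorem lemma3p4:
  fixes A :: "complex^'n^'n"
    and S :: "complex^'n^'n \<Rightarrow> complex^'n^'n"
    and M :: "complex \<Rightarrow> complex^'n^'n"
    and V :: "real set \<Rightarrow> complex^'n^'n"
  assumes "data_pair A S"
    and "solves_MDE A S M"
    and "psd_matrix_measure V" and "V UNIV = mat 1"
    and "stieltjes_rep V M"
  shows "(\<forall>z. 0 < Im z \<longrightarrow>
            opnorm2 (M z) \<le> 1 / d_rho (dos V) z \<and>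
            loewner_le (cscale (complex_of_real (Im z / (opnorm2 (matrix_inv (M z)))\<^sup>2)) (mat 1))
                       (ImM (M z)) \<and>
            loewner_le (ImM (M z))
                       (cscale (complex_of_real (Im z / (d_rho (dos V) z)\<^sup>2)) (mat 1)) \<and>
            opnorm2 (matrix_inv (M z)) \<le> cmod z + opnorm2 A + opnorm_S S * opnorm2 (M z))
       \<and> (\<forall>z. 0 < Im z \<longrightarrow> rho_ext M z \<le> Im z / (pi * (d_rho (dos V) z)\<^sup>2))"
  using pointwise[OF assms] by blast



end
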